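(* Let $n\ge3$ and $k\ge0$ be integers. There exists a subset of $\mathrm{Inc}(A,B)$ that is independent in $G_n^k$ and not reversible if and only if $n\le 2k$.
   Context: For integers $n\ge3$, $k\ge0$, the crown $S_n^k$ is the poset with ground set $A\cup B$, $A=\{a_1,\dots,a_{n+k}\}$, $B=\{b_1,\dots,b_{n+k}\}$, indices cyclic modulo $n+k$; elements of $A$ are pairwise incomparable, as are elements of $B$, and $a_i$ is incomparable to $b_j$ when $j\in\{i,i+1,\dots,i+k\}$ (mod $n+k$), while $a_i<b_j$ otherwise. $\mathrm{Inc}(A,B)$ is the set of pairs $(a,b)\in A\times B$ with $a$ incomparable to $b$. The graph $G_n^k$ has vertex set $\mathrm{Inc}(A,B)$, with $(a,b)$ adjacent to $(x,y)$ iff $a<y$ and $x<b$ in $S_n^k$. A set $R\subseteq\mathrm{Inc}(A,B)$ is reversible if there is a linear extension $L$ of $S_n^k$ with $b<a$ in $L$ for all $(a,b)\in R$. *)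

theory Defs
  imports Main
begin

text \<open>Elements of the crown: CA i stands for a_i, CB j for b_j, indices taken in
  {0..<n+k} (cyclic modulo n+k).\<close>
datatype elem = CA nat | CB nat

definition ground :: "nat \<Rightarrow> nat \<Rightarrow> elem set" where
  "ground n k = {CA i | i. i < n + k} \<union> {CB j | j. j < n + k}"

definition crown_incomp_idx :: "nat \<Rightarrow> nat \<Rightarrow> nat \<Rightarrow> nat \<Rightarrow> bool" where
  "crown_incomp_idx n k i j \<longleftrightarrow> (\<exists>t\<le>k. j = (i + t) mod (n + k))"

definition crown_less :: "nat \<Rightarrow> nat \<Rightarrow> elem \<Rightarrow> elem \<Rightarrow> bool" where
  "crown_less n k x y \<longleftrightarrow>
     (\<exists>i j. x = CA i \<and> y = CB j \<and> i < n + k \<and> j < n + k \<and> \<not> crown_incomp_idx n k i j)"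

definition crown_le :: "nat \<Rightarrow> nat \<Rightarrow> elem rel" where
  "crown_le n k = Id_on (ground n k) \<union> {(x, y). crown_less n k x y}"

definition incomparable :: "nat \<Rightarrow> nat \<Rightarrow> elem \<Rightarrow> elem \<Rightarrow> bool" where
  "incomparable n k x y \<longleftrightarrow> x \<noteq> y \<and> \<not> crown_less n k x y \<and> \<not> crown_less n k y x"

definition Inc :: "nat \<Rightarrow> nat \<Rightarrow> (elem \<times> elem) set" where
  "Inc n k = {(a, b). a \<in> {CA i | i. i < n + k} \<and> b \<in> {CB j | j. j < n + k}
                      \<and> incomparable n k a b}"

definition G_adj :: "nat \<Rightarrow> nat \<Rightarrow> elem \<times> elem \<Rightarrow> elem \<times> elem \<Rightarrow> bool" where
  "G_adj n k p q \<longleftrightarrow> crown_less n k (fst p) (snd q) \<and> crown_less n k (fst q) (snd p)"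

definition independent :: "nat \<Rightarrow> nat \<Rightarrow> (elem \<times> elem) set \<Rightarrow> bool" where
  "independent n k R \<longleftrightarrow> R \<subseteq> Inc n k \<and> (\<forall>p\<in>R. \<forall>q\<in>R. \<not> G_adj n k p q)"

definition linear_extension :: "nat \<Rightarrow> nat \<Rightarrow> elem rel \<Rightarrow> bool" where
  "linear_extension n k L \<longleftrightarrow> linear_order_on (ground n k) L \<and> crown_le n k \<subseteq> L"

definition reversible :: "nat \<Rightarrow> nat \<Rightarrow> (elem \<times> elem) set \<Rightarrow> bool" where
  "reversible n k R \<longleftrightarrow>
     (\<exists>L. linear_extension n k L \<and> (\<forall>(a, b)\<in>R. (b, a) \<in> L \<and> b \<noteq> a))"

end

theory Submission
  imports Defs
begin


definition off :: "nat \<Rightarrow> nat \<Rightarrow> nat \<Rightarrow> nat \<Rightarrow> int" where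
  "off n k i x = (int x - int i) mod int (n+k)"

lemma mod_small:
  fixes v M :: int
  assumes "0 < M" "- M < v" "v < M"
  shows "v mod M = (if 0 \<le> v then v else v + M)"
proof (cases "0 \<le> v")
  case True then show ?thesis using assms by simp
next
  case False
  have "v mod M = (v + M) mod M" by simp
  also have "\<dots> = v + M" using assms False by (intro mod_pos_pos_trivial) auto
  finally show ?thesis using False by simp
qed

lemma incomp_off:
  assumes "n \<ge> 1" "x < n + k"
  shows "crown_incomp_idx n k i x \<longleftrightarrow> off n k i x \<le> int k"
proof
  assume "crown_incomp_idx n k i x"
  then obtain t where t: "t \<le> k" "x = (i + t) mod (n+k)" unfolding crown_incomp_idx_def by blast
  have "off n k i x = (int ((i+t) mod (n+k)) - int i) mod int (n+k)" using t by (simp add: off_def)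
  also have "\<dots> = ((int i + int t) mod int (n+k) - int i) mod int (n+k)" by (simp add: of_nat_mod)
  also have "\<dots> = int t mod int (n+k)" by (simp add: mod_simps)
  also have "\<dots> = int t" using t assms by (intro mod_pos_pos_trivial) auto
  finally show "off n k i x \<le> int k" using t by simp
next
  assume h: "off n k i x \<le> int k"
  define t where "t = nat (off n k i x)"
  have o0: "0 \<le> off n k i x" using assms by (simp add: off_def)
  have tk: "t \<le> k" using h o0 by (simp add: t_def)
  have "int ((i + t) mod (n+k)) = (int i + off n k i x) mod int (n+k)"
    using o0 by (simp add: t_def of_nat_mod)
  also have "\<dots> = int x mod int (n+k)" by (simp add: off_def mod_simps)
  also have "\<dots> = int x" using assms by (intro mod_pos_pos_trivial) auto
  finally have "x = (i + t) mod (n+k)" by simp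
  then show "crown_incomp_idx n k i x" using tk unfolding crown_incomp_idx_def by blast
qed

lemma less_CA_CB:
  assumes "n \<ge> 1"
  shows "crown_less n k (CA i) (CB j) \<longleftrightarrow> i < n+k \<and> j < n+k \<and> off n k i j > int k"
  using incomp_off[OF assms] by (auto simp: crown_less_def)

lemma not_less_CB: "\<not> crown_less n k (CB j) y"
  by (simp add: crown_less_def)
lemma not_less_CA2: "\<not> crown_less n k x (CA i)"
  by (simp add: crown_less_def)



lemma incomp_CA_CB:
  assumes "n \<ge> 1" "i < n+k" "j < n+k" "off n k i j \<le> int k"
  shows "(CA i, CB j) \<in> Inc n k"
  using assms incomp_off[OF assms(1)] by (auto simp: Inc_def incomparable_def crown_less_def)

lemma backward:
  assumes n3: "n \<ge> 3" and nk: "n \<le> 2 * k"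
  shows "\<exists>R. R \<subseteq> Inc n k \<and> independent n k R \<and> \<not> reversible n k R"
proof -
  define m where "m = n + k"
  define x where "x = min k (n - 1)"
  define q where "q = max n (k + 1)"
  have x1: "1 \<le> x" "x \<le> k" "x \<le> n - 1" using n3 nk by (auto simp: x_def)
  have q1: "n \<le> q" "k + 1 \<le> q" "q < m" "q \<le> x + k" "q \<le> n + k - 1"
    using n3 nk by (auto simp: q_def x_def m_def)
  have mpos: "0 < int m" using n3 by (simp add: m_def)
  have o1: "off n k 0 0 = 0" by (simp add: off_def)
  have o2: "off n k n q = int q - int n" using q1 by (simp add: off_def m_def[symmetric] mod_pos_pos_trivial)
  have o3: "off n k x x = 0" by (simp add: off_def)
  have o4: "off n k 0 q = int q" using q1 by (simp add: off_def m_def[symmetric] mod_pos_pos_trivial)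
  have o5: "off n k n x = int x - int n + int m"
    using mod_small[OF mpos, of "int x - int n"] x1 q1 by (simp add: off_def m_def[symmetric])
  have o6: "off n k x 0 = - int x + int m"
    using mod_small[OF mpos, of "- int x"] x1 q1 by (simp add: off_def m_def[symmetric])
  have o7: "off n k n 0 = - int n + int m"
    using mod_small[OF mpos, of "- int n"] x1 q1 n3 by (simp add: off_def m_def[symmetric])
  have o8: "off n k x q = int q - int x"
    using x1 q1 by (simp add: off_def m_def[symmetric] mod_pos_pos_trivial)
  have o9: "off n k 0 x = int x"
    using x1 q1 by (simp add: off_def m_def[symmetric] mod_pos_pos_trivial)
  have lt: "\<And>i j. crown_less n k (CA i) (CB j) \<longleftrightarrow> i < m \<and> j < m \<and> off n k i j > int k"
    using less_CA_CB[of n k] n3 by (simp add: m_def)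
  define R where "R = {(CA 0, CB 0), (CA n, CB q), (CA x, CB x)}"
  have xm: "x < m" "n < m" using x1 q1 by (auto simp: m_def)
  have RInc: "R \<subseteq> Inc n k"
  proof -
    have "(CA 0, CB 0) \<in> Inc n k" using n3 xm o1 by (intro incomp_CA_CB) (auto simp: m_def)
    moreover have "(CA n, CB q) \<in> Inc n k" using n3 xm q1 o2 by (intro incomp_CA_CB) (auto simp: m_def)
    moreover have "(CA x, CB x) \<in> Inc n k" using n3 xm o3 by (intro incomp_CA_CB) (auto simp: m_def)
    ultimately show ?thesis by (simp add: R_def)
  qed
  have ind: "independent n k R"
    unfolding independent_def G_adj_def R_def
    using RInc R_def lt o1 o2 o3 o4 o5 o6 o7 o8 o9 x1 q1 xm
    by (auto simp: m_def not_less_CB not_less_CA2)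
  have c1: "crown_less n k (CA 0) (CB q)" using lt o4 q1 xm by simp
  have c2: "crown_less n k (CA n) (CB x)" using lt o5 q1 x1 xm by (simp add: m_def)
  have c3: "crown_less n k (CA x) (CB 0)" using lt o6 q1 x1 xm by (simp add: m_def)
  have nrev: "\<not> reversible n k R"
  proof
    assume "reversible n k R"
    then obtain L where L: "linear_extension n k L" and rv: "\<forall>(a, b)\<in>R. (b, a) \<in> L \<and> b \<noteq> a"
      unfolding reversible_def by blast
    have lo: "linear_order_on (ground n k) L" and sub: "crown_le n k \<subseteq> L"
      using L by (auto simp: linear_extension_def)
    have tr: "trans L" and an: "antisym L"
      using lo by (auto simp: linear_order_on_def partial_order_on_def preorder_on_def)
    have e1: "(CB 0, CA 0) \<in> L" "(CB q, CA n) \<in> L" "(CB x, CA x) \<in> L"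
      using rv by (auto simp: R_def)
    have e2: "(CA 0, CB q) \<in> L" "(CA n, CB x) \<in> L" "(CA x, CB 0) \<in> L"
      using sub c1 c2 c3 by (auto simp: crown_le_def)
    have "(CA 0, CB 0) \<in> L" using e1 e2 tr by (meson transD)
    then have "CA 0 = CB 0" using e1 an by (meson antisymD)
    then show False by simp
  qed
  show ?thesis using RInc ind nrev by blast
qed



locale fw =
  fixes n k :: nat and R :: "(elem \<times> elem) set"
  assumes n3: "n \<ge> 3" and big: "2 * k < n"
    and RInc: "R \<subseteq> Inc n k" and indep: "independent n k R"
begin

abbreviation "m \<equiv> n + k"

definition P :: "(nat \<times> nat) set" where "P = {(i,j). (CA i, CB j) \<in> R}"

definition E :: "(nat \<times> nat) set" where
  "E = {(j,j'). \<exists>i. (i,j) \<in> P \<and> j' < m \<and> off n k i j' > int k}"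

lemma lt: "crown_less n k (CA i) (CB j) \<longleftrightarrow> i < m \<and> j < m \<and> off n k i j > int k"
  using less_CA_CB[of n k] n3 by simp

lemma PD: "(i,j) \<in> P \<Longrightarrow> i < m \<and> j < m \<and> off n k i j \<le> int k"
  using RInc n3 incomp_off[of n "j" k i] unfolding P_def Inc_def incomparable_def
  by (auto simp: crown_less_def)

lemma R_form: "p \<in> R \<Longrightarrow> \<exists>i j. p = (CA i, CB j) \<and> (i,j) \<in> P"
  using RInc unfolding P_def Inc_def by auto

lemma indepP:
  assumes "(i,j) \<in> P" "(i',j') \<in> P"
  shows "\<not> (off n k i j' > int k \<and> off n k i' j > int k)"
proof
  assume h: "off n k i j' > int k \<and> off n k i' j > int k"
  have "(CA i, CB j) \<in> R" "(CA i', CB j') \<in> R" using assms by (auto simp: P_def)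
  moreover have "G_adj n k (CA i, CB j) (CA i', CB j')"
    using h PD[OF assms(1)] PD[OF assms(2)] by (simp add: G_adj_def lt)
  ultimately show False using indep unfolding independent_def by blast
qed

lemma modl: "(a mod c - b mod c + d) mod c = (a - b + d) mod (c::int)"
  by (metis mod_add_left_eq mod_diff_eq)

lemma mpos: "0 < int m" using n3 by simp

lemma claimA:
  assumes p0: "(i0,j0) \<in> P" and p: "(i,j) \<in> P"
  shows "(int i - int i0 + int k) mod int m \<le> 2 * int k"
proof -
  have w0: "off n k i0 j0 \<le> int k" and w: "off n k i j \<le> int k"
    using PD p0 p by auto
  have nn: "\<And>a b. 0 \<le> off n k a b" using mpos by (simp add: off_def)
  have gen: "(int i - int i0 + int k) mod int m \<le> 2 * int k"
    if "0 \<le> a" "a \<le> int k" "0 \<le> b" "b \<le> int k"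
       "(a - b + int k) mod int m = (int i - int i0 + int k) mod int m" for a b
  proof -
    have "(a - b + int k) mod int m = a - b + int k"
      using that big by (intro mod_pos_pos_trivial) auto
    then show ?thesis using that by simp
  qed
  from indepP[OF p0 p] consider "off n k i0 j \<le> int k" | "off n k i j0 \<le> int k" by linarith
  then show ?thesis
  proof cases
    case 1
    have "(off n k i0 j - off n k i j + int k) mod int m = (int i - int i0 + int k) mod int m"
    proof -
      have "(off n k i0 j - off n k i j + int k) mod int m
          = ((int j - int i0) - (int j - int i) + int k) mod int m"
        unfolding off_def by (rule modl)
      then show ?thesis by simp
    qed
    then show ?thesis using gen[of "off n k i0 j" "off n k i j"] 1 w nn by blast
  next
    case 2
    have "(off n k i0 j0 - off n k i j0 + int k) mod int m = (int i - int i0 + int k) mod int m"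
    proof -
      have "(off n k i0 j0 - off n k i j0 + int k) mod int m
          = ((int j0 - int i0) - (int j0 - int i) + int k) mod int m"
        unfolding off_def by (rule modl)
      then show ?thesis by simp
    qed
    then show ?thesis using gen[of "off n k i0 j0" "off n k i j0"] 2 w0 nn by blast
  qed
qed

definition y :: "nat \<Rightarrow> nat \<Rightarrow> int" where
  "y i0 x = (int x - int i0 + int k) mod int m"

lemma y_range: "0 \<le> y i0 x" "y i0 x < int m"
  using mpos by (auto simp: y_def)

lemma claimB:
  assumes "y i0 i \<le> 2 * int k"
  shows "off n k i x \<le> int k \<longleftrightarrow> y i0 i \<le> y i0 x \<and> y i0 x \<le> y i0 i + int k"
proof -
  have "off n k i x = (y i0 x - y i0 i) mod int m"
  proof -
    have "(y i0 x - y i0 i) mod int m = ((int x - int i0 + int k) - (int i - int i0 + int k)) mod int m"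
      unfolding y_def by (simp add: mod_simps)
    then show ?thesis by (simp add: off_def)
  qed
  also have "\<dots> = (if 0 \<le> y i0 x - y i0 i then y i0 x - y i0 i else y i0 x - y i0 i + int m)"
    using y_range[of i0 x] y_range[of i0 i] by (intro mod_small[OF mpos]) auto
  finally show ?thesis using assms big y_range[of i0 x] y_range[of i0 i] by auto
qed

lemma source:
  assumes T: "T \<subseteq> {..<m}" "T \<noteq> {}"
  shows "\<exists>s\<in>T. \<forall>j\<in>T. (j,s) \<notin> E"
proof (cases "\<exists>i j. (i,j) \<in> P \<and> j \<in> T")
  case False
  then show ?thesis using T by (auto simp: E_def)
next
  case True
  define Q where "Q = {p \<in> P. snd p \<in> T}"
  obtain i0 j0 where p0: "(i0,j0) \<in> Q" using True by (auto simp: Q_def)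
  have QP: "Q \<subseteq> P" by (auto simp: Q_def)
  have finP: "finite P"
  proof -
    have "P \<subseteq> {..<m} \<times> {..<m}" using PD by auto
    then show ?thesis by (rule finite_subset) auto
  qed
  have finQ: "finite Q" using finP QP by (rule finite_subset[rotated])
  have Qne: "Q \<noteq> {}" using p0 by auto
  define f where "f = (\<lambda>p::nat\<times>nat. y i0 (fst p))"
  have fi: "finite (f ` Q)" "f ` Q \<noteq> {}" using finQ Qne by auto
  obtain \<alpha> where a0: "\<alpha> \<in> Q" "f \<alpha> = Max (f ` Q)"
    using Max_in[OF fi] by auto
  have a: "\<alpha> \<in> Q" "\<And>q. q \<in> Q \<Longrightarrow> f q \<le> f \<alpha>"
    using a0 fi Max_ge by auto
  obtain \<beta> where b0: "\<beta> \<in> Q" "f \<beta> = Min (f ` Q)"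
    using Min_in[OF fi] by auto
  have b: "\<beta> \<in> Q" "\<And>q. q \<in> Q \<Longrightarrow> f \<beta> \<le> f q"
    using b0 fi Min_le by auto
  obtain ia ja where ab: "\<alpha> = (ia, ja)" by (cases \<alpha>)
  obtain ib jb where bb: "\<beta> = (ib, jb)" by (cases \<beta>)
  have p0P: "(i0,j0) \<in> P" using p0 QP by auto
  have yle: "\<And>i j. (i,j) \<in> P \<Longrightarrow> y i0 i \<le> 2 * int k"
    using claimA[OF p0P] by (simp add: y_def)
  have aP: "(ia,ja) \<in> P" and bP: "(ib,jb) \<in> P" using a b ab bb QP by auto
  have cB: "\<And>i j x. (i,j) \<in> P \<Longrightarrow> off n k i x \<le> int k \<longleftrightarrow> y i0 i \<le> y i0 x \<and> y i0 x \<le> y i0 i + int k"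
    using claimB yle by blast
  have rng: "\<And>i j. (i,j) \<in> Q \<Longrightarrow> y i0 ib \<le> y i0 i \<and> y i0 i \<le> y i0 ia"
    using a b ab bb by (force simp: f_def)
  have goal: "\<forall>i j. (i,j) \<in> Q \<longrightarrow> off n k i s \<le> int k"
    if "y i0 ia \<le> y i0 s" "y i0 s \<le> y i0 ib + int k" for s
  proof (intro allI impI)
    fix i j assume "(i,j) \<in> Q"
    then show "off n k i s \<le> int k" using cB[of i j s] rng[of i j] that QP by auto
  qed
  have inE: "\<And>j s. j \<in> T \<Longrightarrow> (j,s) \<in> E \<Longrightarrow> \<exists>i. (i,j) \<in> Q \<and> off n k i s > int k"
    by (auto simp: E_def Q_def)
  show ?thesis
  proof (cases "y i0 ja \<le> y i0 ib + int k")
    case True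
    have "y i0 ia \<le> y i0 ja" using cB[of ia ja ja] aP PD[OF aP] by auto
    then have g: "\<forall>i j. (i,j) \<in> Q \<longrightarrow> off n k i ja \<le> int k" using goal True by blast
    have jT: "ja \<in> T" using a ab by (auto simp: Q_def)
    show ?thesis
    proof (intro bexI[OF _ jT] ballI notI)
      fix j assume "j \<in> T" "(j, ja) \<in> E"
      then obtain i where "(i,j) \<in> Q" "off n k i ja > int k" using inE by blast
      then show False using g by force
    qed
  next
    case False
    have "off n k ib ja > int k" using cB[of ib jb ja] bP False by auto
    then have "off n k ia jb \<le> int k" using indepP[OF aP bP] by linarith
    then have h1: "y i0 ia \<le> y i0 jb" using cB[of ia ja jb] aP by auto
    have h2: "y i0 jb \<le> y i0 ib + int k" using cB[of ib jb jb] bP PD[OF bP] by auto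
    have g: "\<forall>i j. (i,j) \<in> Q \<longrightarrow> off n k i jb \<le> int k" using goal h1 h2 by blast
    have jT: "jb \<in> T" using b bb by (auto simp: Q_def)
    show ?thesis
    proof (intro bexI[OF _ jT] ballI notI)
      fix j assume "j \<in> T" "(j, jb) \<in> E"
      then obtain i where "(i,j) \<in> Q" "off n k i jb > int k" using inE by blast
      then show False using g by force
    qed
  qed
qed

end


context fw begin

lemma keys_gen:
  assumes "finite T"
  shows "T \<subseteq> {..<m} \<longrightarrow> (\<exists>\<kappa>::nat\<Rightarrow>nat. \<forall>j\<in>T. \<forall>j'\<in>T. (j,j') \<in> E \<longrightarrow> \<kappa> j < \<kappa> j')"
  using assms
proof (induction T rule: finite_remove_induct)
  case empty then show ?case by auto
next
  case (remove A)
  show ?case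
  proof
    assume Am: "A \<subseteq> {..<m}"
    obtain s where s: "s \<in> A" "\<forall>j\<in>A. (j,s) \<notin> E" using source[OF Am remove.hyps(2)] by blast
    have As: "A - {s} \<subseteq> {..<m}" using Am by auto
    obtain \<kappa> :: "nat \<Rightarrow> nat" where k: "\<forall>j\<in>A - {s}. \<forall>j'\<in>A - {s}. (j,j') \<in> E \<longrightarrow> \<kappa> j < \<kappa> j'"
      using remove.IH[OF s(1)] As by blast
    define \<kappa>' where "\<kappa>' = (\<lambda>x. if x = s then 0 else Suc (\<kappa> x))"
    have "\<forall>j\<in>A. \<forall>j'\<in>A. (j,j') \<in> E \<longrightarrow> \<kappa>' j < \<kappa>' j'"
    proof (intro ballI impI)
      fix j j' assume h: "j \<in> A" "j' \<in> A" "(j,j') \<in> E"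
      then have "j' \<noteq> s" using s by blast
      then show "\<kappa>' j < \<kappa>' j'" using k h by (auto simp: \<kappa>'_def)
    qed
    then show "\<exists>\<kappa>::nat\<Rightarrow>nat. \<forall>j\<in>A. \<forall>j'\<in>A. (j,j') \<in> E \<longrightarrow> \<kappa> j < \<kappa> j'" by blast
  qed
qed

lemma E_dom: "(j,j') \<in> E \<Longrightarrow> j < m \<and> j' < m"
  using PD by (auto simp: E_def)

lemma keys: "\<exists>\<kappa>::nat\<Rightarrow>nat. \<forall>j j'. (j,j') \<in> E \<longrightarrow> \<kappa> j < \<kappa> j'"
proof -
  obtain \<kappa> :: "nat\<Rightarrow>nat" where k: "\<forall>j\<in>{..<m}. \<forall>j'\<in>{..<m}. (j,j') \<in> E \<longrightarrow> \<kappa> j < \<kappa> j'"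
    using keys_gen[of "{..<m}"] by auto
  then show ?thesis using E_dom by blast
qed

lemma enc_inj:
  fixes M x y a b :: nat
  assumes "a < M" "b < M" "M*x + a = M*y + b"
  shows "a = b \<and> x = y"
proof -
  have e1: "(a + x*M) mod M = a" using assms(1) by simp
  have e2: "(b + y*M) mod M = b" using assms(2) by simp
  have "a + x*M = b + y*M" using assms(3) by (simp add: algebra_simps)
  then have ab: "a = b" using e1 e2 by metis
  then show ?thesis using assms by simp
qed

lemma reversibleR: "reversible n k R"
proof -
  obtain \<kappa> :: "nat\<Rightarrow>nat" where k: "\<And>j j'. (j,j') \<in> E \<Longrightarrow> \<kappa> j < \<kappa> j'"
    using keys by blast
  define S where "S i = \<kappa> ` {j. (i,j) \<in> P}" for i
  have finS: "finite (S i)" for i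
  proof -
    have "{j. (i,j) \<in> P} \<subseteq> {..<m}" using PD by auto
    then show ?thesis unfolding S_def by (meson finite_imageI finite_lessThan finite_subset)
  qed
  define \<nu> where "\<nu> i = (if S i = {} then 0 else Suc (Max (S i)))" for i
  have nu_le: "\<nu> i \<le> \<kappa> j'" if "(i,j) \<in> P \<longrightarrow> True" "i < m" "j' < m" "off n k i j' > int k" for i j j'
  proof (cases "S i = {}")
    case True then show ?thesis by (simp add: \<nu>_def)
  next
    case False
    have "\<forall>a\<in>S i. a < \<kappa> j'"
    proof
      fix a assume "a \<in> S i"
      then obtain j where "(i,j) \<in> P" "a = \<kappa> j" by (auto simp: S_def)
      then have "(j,j') \<in> E" using that by (auto simp: E_def)
      then show "a < \<kappa> j'" using k \<open>a = \<kappa> j\<close> by simp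
    qed
    then have "Max (S i) < \<kappa> j'" using Max_less_iff[OF finS False] by blast
    then show ?thesis using False by (simp add: \<nu>_def)
  qed
  have nu_gt: "\<kappa> j < \<nu> i" if "(i,j) \<in> P" for i j
  proof -
    have "\<kappa> j \<in> S i" using that by (auto simp: S_def)
    then have "\<kappa> j \<le> Max (S i)" "S i \<noteq> {}" using finS by auto
    then show ?thesis by (simp add: \<nu>_def)
  qed
  define r where "r x = (case x of CA i \<Rightarrow> 2*m*\<nu> i + i | CB j \<Rightarrow> 2*m*\<kappa> j + (m + j))" for x
  have rA: "r (CA i) = 2*m*\<nu> i + i" for i by (simp add: r_def)
  have rB: "r (CB j) = 2*m*\<kappa> j + (m + j)" for j by (simp add: r_def)
  define L where "L = {(a,b). a \<in> ground n k \<and> b \<in> ground n k \<and> r a \<le> r b}"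
  have gr: "x \<in> ground n k \<longleftrightarrow> (\<exists>i<m. x = CA i) \<or> (\<exists>j<m. x = CB j)" for x
    by (auto simp: ground_def)
  have inj: "x = y" if "x \<in> ground n k" "y \<in> ground n k" "r x = r y" for x y
  proof -
    have "2*m*\<nu> i + i = 2*m*\<nu> i' + i' \<Longrightarrow> i < m \<Longrightarrow> i' < m \<Longrightarrow> i = i'" for i i'
      using enc_inj[of i "2*m" i' "\<nu> i" "\<nu> i'"] by simp
    moreover have "2*m*\<kappa> j + (m+j) = 2*m*\<kappa> j' + (m+j') \<Longrightarrow> j < m \<Longrightarrow> j' < m \<Longrightarrow> j = j'" for j j'
      using enc_inj[of "m+j" "2*m" "m+j'" "\<kappa> j" "\<kappa> j'"] by simp
    moreover have "2*m*\<nu> i + i \<noteq> 2*m*\<kappa> j + (m+j)" if "i < m" "j < m" for i j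
      using enc_inj[of i "2*m" "m+j" "\<nu> i" "\<kappa> j"] that by auto
    ultimately show ?thesis using that(3)
    proof -
      assume A1: "\<And>i i'. 2*m*\<nu> i + i = 2*m*\<nu> i' + i' \<Longrightarrow> i < m \<Longrightarrow> i' < m \<Longrightarrow> i = i'"
        and A2: "\<And>j j'. 2*m*\<kappa> j + (m+j) = 2*m*\<kappa> j' + (m+j') \<Longrightarrow> j < m \<Longrightarrow> j' < m \<Longrightarrow> j = j'"
        and A3: "\<And>i j. i < m \<Longrightarrow> j < m \<Longrightarrow> 2*m*\<nu> i + i \<noteq> 2*m*\<kappa> j + (m+j)"
        and e: "r x = r y"
      from that(1)[unfolded gr] that(2)[unfolded gr] show "x = y"
      proof (elim disjE exE conjE)
        fix i i' assume "i < m" "x = CA i" "i' < m" "y = CA i'"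
        moreover have "2*m*\<nu> i + i = 2*m*\<nu> i' + i'" using e calculation by (simp add: r_def)
        ultimately show ?thesis using A1 by blast
      next
        fix i j assume "i < m" "x = CA i" "j < m" "y = CB j"
        moreover have "2*m*\<nu> i + i = 2*m*\<kappa> j + (m+j)" using e calculation by (simp add: r_def)
        ultimately show ?thesis using A3 by blast
      next
        fix i j assume "j < m" "x = CB j" "i < m" "y = CA i"
        moreover have "2*m*\<nu> i + i = 2*m*\<kappa> j + (m+j)" using e calculation by (simp add: r_def)
        ultimately show ?thesis using A3 by metis
      next
        fix j j' assume "j < m" "x = CB j" "j' < m" "y = CB j'"
        moreover have "2*m*\<kappa> j + (m+j) = 2*m*\<kappa> j' + (m+j')" using e calculation by (simp add: r_def)
        ultimately show ?thesis using A2 by blast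
      qed
    qed
  qed
  have lin: "linear_order_on (ground n k) L"
  proof -
    have "L \<subseteq> ground n k \<times> ground n k" by (auto simp: L_def)
    moreover have "refl_on (ground n k) L" by (auto simp: refl_on_def L_def)
    moreover have "trans L" by (auto simp: trans_def L_def)
    moreover have "antisym L"
    proof (rule antisymI)
      fix x y assume "(x,y) \<in> L" "(y,x) \<in> L"
      then have "x \<in> ground n k" "y \<in> ground n k" "r x = r y" by (auto simp: L_def)
      then show "x = y" by (rule inj)
    qed
    moreover have "total_on (ground n k) L" by (auto simp: total_on_def L_def)
    ultimately show ?thesis
      unfolding linear_order_on_def partial_order_on_def preorder_on_def by blast
  qed
  have sub: "crown_le n k \<subseteq> L"
  proof
    fix p assume "p \<in> crown_le n k"
    then consider "p \<in> Id_on (ground n k)" | "crown_less n k (fst p) (snd p)"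
      unfolding crown_le_def by auto
    then show "p \<in> L"
    proof cases
      case 1 then show ?thesis by (auto simp: L_def)
    next
      case 2
      then obtain i j where ij: "p = (CA i, CB j)" "i < m" "j < m" "off n k i j > int k"
        using lt by (cases p) (auto simp: crown_less_def)
      have "\<nu> i \<le> \<kappa> j" using nu_le[of i i j] ij by simp
      then have "2*m*\<nu> i \<le> 2*m*\<kappa> j" by simp
      then have "r (CA i) \<le> r (CB j)" unfolding rA rB using ij by linarith
      then show ?thesis using ij gr by (auto simp: L_def)
    qed
  qed
  have rev: "\<forall>(a, b)\<in>R. (b, a) \<in> L \<and> b \<noteq> a"
  proof (intro ballI)
    fix p assume "p \<in> R"
    then obtain i j where ij: "p = (CA i, CB j)" "(i,j) \<in> P" using R_form by blast
    have im: "i < m" "j < m" using PD[OF ij(2)] by auto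
    have "Suc (\<kappa> j) \<le> \<nu> i" using nu_gt[OF ij(2)] by simp
    then have "2*m*Suc (\<kappa> j) \<le> 2*m*\<nu> i" by (rule mult_le_mono2)
    then have "2*m*\<kappa> j + 2*m \<le> 2*m*\<nu> i" by (metis mult_Suc_right add.commute)
    moreover have "\<And>X Y M j i::nat. X + 2*M \<le> Y \<Longrightarrow> j < M \<Longrightarrow> X + (M + j) \<le> Y + i" by linarith
    ultimately have "r (CB j) \<le> r (CA i)" unfolding rA rB using im by blast
    then have "(CB j, CA i) \<in> L" using im gr by (auto simp: L_def)
    then show "case p of (a, b) \<Rightarrow> (b, a) \<in> L \<and> b \<noteq> a" using ij by simp
  qed
  show ?thesis unfolding reversible_def linear_extension_def using lin sub rev by blast
qed

end

lemma forward:
  assumes "n \<ge> 3" "\<not> n \<le> 2 * k" "R \<subseteq> Inc n k" "independent n k R"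
  shows "reversible n k R"
proof -
  interpret fw n k R using assms by unfold_locales auto
  show ?thesis by (rule reversibleR)
qed


theorem lemma1p4:
  fixes n k :: nat
  assumes "n \<ge> 3"
  shows "(\<exists>R. R \<subseteq> Inc n k \<and> independent n k R \<and> \<not> reversible n k R) \<longleftrightarrow> n \<le> 2 * k"
proof
  assume "\<exists>R. R \<subseteq> Inc n k \<and> independent n k R \<and> \<not> reversible n k R"
  then obtain R where "R \<subseteq> Inc n k" "independent n k R" "\<not> reversible n k R" by blast
  then show "n \<le> 2 * k" using forward[OF assms] by blast
next
  assume "n \<le> 2 * k"
  then show "\<exists>R. R \<subseteq> Inc n k \<and> independent n k R \<and> \<not> reversible n k R"
    using backward[OF assms] by blast
qed

end
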